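(* Let $S\subset\mathbb{R}^p$ be a compact set with $\mathrm{cl}(\mathrm{int}(S))=S$ and let $\mu_S$ be the uniform probability measure on $S$. Let $\mathbf{x}\notin S$ and let $\delta$ be such that $\mathrm{dist}(\mathbf{x},S)\ge\delta$. Then for every positive integer $d$, \[s(d)\,\Lambda_{\mu_S,d}(\mathbf{x})\le 2^{3-\frac{\delta d}{\delta+\mathrm{diam}(S)}}\,d^p\left(\frac{e}{p}\right)^p\exp\left(\frac{p^2}{d}\right).\]
   Context: $\mu_S=\lambda_S/\lambda(S)$ where $\lambda_S$ is the restriction of Lebesgue measure to $S$; $\mathrm{diam}(S)$ is the diameter of $S$; $s(d)=\binom{p+d}{d}$. For a finite Borel measure $\nu$ with finite moments, $\Lambda_{\nu,d}(\xi)=\min\{\int P^2\,d\nu: P\in\mathbb{R}[X]_d,\ P(\xi)=1\}$, where $\mathbb{R}[X]_d$ is the space of real polynomials in $p$ variables of total degree at most $d$. *)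

theory Defs
  imports "HOL-Analysis.Analysis"
begin

definition multi_idx :: "nat \<Rightarrow> ('n::finite \<Rightarrow> nat) set" where
  "multi_idx d = {\<alpha>. (\<Sum>i\<in>UNIV. \<alpha> i) \<le> d}"

definition monomial_fn :: "('n::finite \<Rightarrow> nat) \<Rightarrow> real^'n \<Rightarrow> real" where
  "monomial_fn \<alpha> x = (\<Prod>i\<in>UNIV. (x $ i) ^ (\<alpha> i))"

definition polys_deg :: "nat \<Rightarrow> (real^'n::finite \<Rightarrow> real) set" where
  "polys_deg d = {P. \<exists>c. P = (\<lambda>x. \<Sum>\<alpha>\<in>multi_idx d. c \<alpha> * monomial_fn \<alpha> x)}"

definition christoffel :: "(real^'n::finite) measure \<Rightarrow> nat \<Rightarrow> real^'n \<Rightarrow> real" where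
  "christoffel \<nu> d \<xi> = Inf {integral\<^sup>L \<nu> (\<lambda>x. (P x)^2) | P. P \<in> polys_deg d \<and> P \<xi> = 1}"

definition unif_meas :: "(real^'n::finite) set \<Rightarrow> (real^'n) measure" where
  "unif_meas S = uniform_measure lborel S"

definition sdim :: "nat \<Rightarrow> nat \<Rightarrow> nat" where
  "sdim p d = (p + d) choose d"

end

theory Submission
  imports Defs "HOL-Probability.Probability"
begin


lemma finite_multi_idx: "finite (multi_idx d :: ('n::finite \<Rightarrow> nat) set)"
proof -
  have "multi_idx d \<subseteq> PiE (UNIV::'n set) (\<lambda>_. {..d})"
  proof
    fix \<alpha> :: "'n \<Rightarrow> nat" assume a: "\<alpha> \<in> multi_idx d"
    have "\<alpha> i \<le> d" for i
    proof -
      have "\<alpha> i \<le> (\<Sum>j\<in>UNIV. \<alpha> j)" by (rule member_le_sum) auto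
      then show ?thesis using a by (simp add: multi_idx_def)
    qed
    then show "\<alpha> \<in> PiE UNIV (\<lambda>_. {..d})" by (auto simp: PiE_def extensional_def)
  qed
  then show ?thesis by (rule finite_subset) (simp add: finite_PiE)
qed

lemma polys_deg_gen:
  fixes g :: "'j \<Rightarrow> ('n::finite \<Rightarrow> nat)"
  assumes "finite J" "\<And>j. j \<in> J \<Longrightarrow> g j \<in> multi_idx d"
  shows "(\<lambda>x. \<Sum>j\<in>J. c j * monomial_fn (g j) x) \<in> polys_deg d"
proof -
  define e where "e \<alpha> = (\<Sum>j\<in>{j\<in>J. g j = \<alpha>}. c j)" for \<alpha>
  have "(\<Sum>\<alpha>\<in>multi_idx d. e \<alpha> * monomial_fn \<alpha> x) = (\<Sum>j\<in>J. c j * monomial_fn (g j) x)" for x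
  proof -
    have "(\<Sum>\<alpha>\<in>multi_idx d. e \<alpha> * monomial_fn \<alpha> x)
        = (\<Sum>\<alpha>\<in>multi_idx d. \<Sum>j\<in>{j\<in>J. g j = \<alpha>}. c j * monomial_fn (g j) x)"
      by (auto simp: e_def sum_distrib_right intro!: sum.cong)
    also have "\<dots> = (\<Sum>j\<in>J. c j * monomial_fn (g j) x)"
      by (rule sum.group) (use assms finite_multi_idx in auto)
    finally show ?thesis .
  qed
  then show ?thesis unfolding polys_deg_def by (intro CollectI exI[of _ e]) auto
qed

lemma polys_deg_mono:
  assumes "P \<in> polys_deg m" "m \<le> n" shows "P \<in> polys_deg n"
proof -
  obtain c where c: "P = (\<lambda>x. \<Sum>\<alpha>\<in>multi_idx m. c \<alpha> * monomial_fn \<alpha> x)"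
    using assms unfolding polys_deg_def by auto
  show ?thesis unfolding c
    by (rule polys_deg_gen[where g=id, simplified]) (use assms finite_multi_idx in \<open>auto simp: multi_idx_def\<close>)
qed

lemma polys_deg_add:
  assumes "P \<in> polys_deg n" "Q \<in> polys_deg n" shows "(\<lambda>x. P x + Q x) \<in> polys_deg n"
proof -
  obtain c where c: "P = (\<lambda>x. \<Sum>\<alpha>\<in>multi_idx n. c \<alpha> * monomial_fn \<alpha> x)"
    using assms unfolding polys_deg_def by auto
  obtain c' where c': "Q = (\<lambda>x. \<Sum>\<alpha>\<in>multi_idx n. c' \<alpha> * monomial_fn \<alpha> x)"
    using assms unfolding polys_deg_def by auto
  show ?thesis unfolding polys_deg_def c c'
    by (intro CollectI exI[of _ "\<lambda>\<alpha>. c \<alpha> + c' \<alpha>"]) (auto simp: sum.distrib algebra_simps)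
qed

lemma polys_deg_scale:
  assumes "P \<in> polys_deg n" shows "(\<lambda>x. a * P x) \<in> polys_deg n"
proof -
  obtain c where c: "P = (\<lambda>x. \<Sum>\<alpha>\<in>multi_idx n. c \<alpha> * monomial_fn \<alpha> x)"
    using assms unfolding polys_deg_def by auto
  show ?thesis unfolding polys_deg_def c
    by (intro CollectI exI[of _ "\<lambda>\<alpha>. a * c \<alpha>"]) (auto simp: sum_distrib_left algebra_simps)
qed

lemma monomial_fn_add: "monomial_fn (\<lambda>i. \<alpha> i + \<beta> i) x = monomial_fn \<alpha> x * monomial_fn \<beta> x"
  by (simp add: monomial_fn_def power_add prod.distrib)

lemma polys_deg_mult:
  assumes "P \<in> polys_deg m" "Q \<in> polys_deg n" shows "(\<lambda>x. P x * Q x) \<in> polys_deg (m + n)"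
proof -
  obtain c where c: "P = (\<lambda>x. \<Sum>\<alpha>\<in>multi_idx m. c \<alpha> * monomial_fn \<alpha> x)"
    using assms unfolding polys_deg_def by auto
  obtain c' where c': "Q = (\<lambda>x. \<Sum>\<alpha>\<in>multi_idx n. c' \<alpha> * monomial_fn \<alpha> x)"
    using assms unfolding polys_deg_def by auto
  have eq: "P x * Q x = (\<Sum>ab\<in>multi_idx m \<times> multi_idx n. (c (fst ab) * c' (snd ab)) * monomial_fn (\<lambda>i. fst ab i + snd ab i) x)" for x
    unfolding c c' sum_product sum.cartesian_product monomial_fn_add
    by (auto intro!: sum.cong simp: algebra_simps)
  have "(\<lambda>x. \<Sum>ab\<in>multi_idx m \<times> multi_idx n. (c (fst ab) * c' (snd ab)) * monomial_fn (\<lambda>i. fst ab i + snd ab i) x) \<in> polys_deg (m+n)"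
    by (rule polys_deg_gen) (auto simp: finite_multi_idx[unfolded multi_idx_def] multi_idx_def sum.distrib)
  then show ?thesis unfolding eq .
qed

lemma polys_deg_const: "(\<lambda>x::real^'n::finite. a) \<in> polys_deg n"
proof -
  have "(\<lambda>x. \<Sum>j\<in>{\<lambda>_::'n. 0::nat}. a * monomial_fn j x) \<in> polys_deg n"
    by (rule polys_deg_gen) (auto simp: multi_idx_def)
  then show ?thesis by (simp add: monomial_fn_def)
qed

lemma polys_deg_coord: "(\<lambda>x::real^'n::finite. x $ i) \<in> polys_deg 1"
proof -
  have "(\<lambda>x. \<Sum>j\<in>{(\<lambda>k. if k = i then 1 else 0)::'n\<Rightarrow>nat}. 1 * monomial_fn j x) \<in> polys_deg 1"
    by (rule polys_deg_gen) (auto simp: multi_idx_def)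
  moreover have "monomial_fn (\<lambda>k. if k = i then 1 else 0) x = x $ i" for x :: "real^'n"
    unfolding monomial_fn_def by (simp add: if_distrib prod.If_cases)
  ultimately show ?thesis by simp
qed

lemma polys_deg_sum:
  assumes "finite I" "\<And>i. i \<in> I \<Longrightarrow> P i \<in> polys_deg n"
  shows "(\<lambda>x. \<Sum>i\<in>I. P i x) \<in> polys_deg n"
  using assms
proof (induction I rule: finite_induct)
  case empty then show ?case using polys_deg_const[of 0 n] by simp
next
  case (insert a F) then show ?case by (simp add: polys_deg_add)
qed

lemma polys_deg_normsq: "(\<lambda>y::real^'n::finite. (norm (y - x))^2) \<in> polys_deg 2"
proof -
  have e: "(norm (y - x))^2 = (\<Sum>i\<in>UNIV. (y$i - x$i) * (y$i - x$i))" for y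
    by (simp add: power2_norm_eq_inner inner_vec_def)
  have "(\<lambda>y::real^'n. y$i - x$i) \<in> polys_deg 1" for i
    using polys_deg_add[OF polys_deg_coord[of i] polys_deg_const[of "- x$i" 1]] by simp
  then have "(\<lambda>y::real^'n. (y$i - x$i) * (y$i - x$i)) \<in> polys_deg 2" for i
    using polys_deg_mult[of _ 1 _ 1] by (metis one_add_one)
  then show ?thesis unfolding e by (intro polys_deg_sum) auto
qed



fun cheb :: "nat \<Rightarrow> real \<Rightarrow> real" where
  "cheb 0 s = 1"
| "cheb (Suc 0) s = s"
| "cheb (Suc (Suc k)) s = 2 * s * cheb (Suc k) s - cheb k s"

lemma cheb_poly:
  assumes "f \<in> polys_deg m" shows "(\<lambda>y. cheb k (f y)) \<in> polys_deg (k * m)"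
proof (induction k rule: induct_nat_012)
  case 0 then show ?case by (simp add: polys_deg_const)
next
  case 1 then show ?case using assms by simp
next
  case (ge2 k)
  have a: "(\<lambda>y. (2 * f y) * cheb (Suc k) (f y)) \<in> polys_deg (m + Suc k * m)"
    by (rule polys_deg_mult[OF polys_deg_scale[OF assms] ge2(2)])
  have b: "(\<lambda>y. -1 * cheb k (f y)) \<in> polys_deg (Suc (Suc k) * m)"
    by (rule polys_deg_scale, rule polys_deg_mono[OF ge2(1)]) simp
  show ?case using polys_deg_add[OF _ b, of "(\<lambda>y. (2 * f y) * cheb (Suc k) (f y))"] a
    by (simp add: algebra_simps)
qed

lemma cheb_cos: "cheb k (cos t) = cos (real k * t)"
proof (induction k rule: induct_nat_012)
  case (ge2 k)
  have "cos (real (Suc (Suc k)) * t) + cos (real k * t) = 2 * cos t * cos (real (Suc k) * t)"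
    using cos_add[of "real (Suc k) * t" t] cos_diff[of "real (Suc k) * t" t]
    by (simp add: algebra_simps)
  then show ?case using ge2 by simp
qed auto

lemma cheb_bound: "\<bar>s\<bar> \<le> 1 \<Longrightarrow> \<bar>cheb k s\<bar> \<le> 1"
  using cheb_cos[of k "arccos s"] by (simp add: cos_arccos_abs)

lemma cheb_lam:
  assumes "l * m = 1" shows "cheb k ((l + m)/2) = (l^k + m^k)/2"
proof (induction k rule: induct_nat_012)
  case (ge2 k)
  have "(l + m) * (l^Suc k + m^Suc k) = l^Suc (Suc k) + m^Suc(Suc k) + (l*m) * (l^k + m^k)"
    by (simp add: algebra_simps)
  then show ?case using ge2 assms by (simp add: field_simps)
qed auto



lemma exp_ge_term: assumes "0 \<le> (x::real)" shows "x ^ n / fact n \<le> exp x"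
proof -
  have "(\<Sum>k\<in>{n}. x ^ k / fact k) \<le> exp x"
    using assms summable_exp_generic[of x]
      sum_le_suminf[of "\<lambda>k. inverse (fact k) * x^k" "{n}"]
    by (auto simp: exp_def divide_inverse ac_simps)
  then show ?thesis by simp
qed

lemma sdim_bound:
  assumes "1 \<le> p" "0 < d"
  shows "real (sdim p d) \<le> real d ^ p * (exp 1 / real p) ^ p * exp (real p ^ 2 / real d)"
proof -
  have f1: "fact p * fact d * ((p + d) choose p) = (fact (p + d) :: nat)"
    using binomial_fact_lemma[of p "p+d"] by simp
  have f2: "fact (p + d) div fact d \<le> (p + d) ^ p"
    using fact_div_fact_le_pow[of p "p+d"] by simp
  have "fact (p + d) div fact d = fact p * ((p + d) choose p)"
    using f1 by (metis div_mult_self1_is_m fact_gt_zero mult.commute mult.left_commute)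
  with f2 have "fact p * ((p + d) choose p) \<le> (p + d) ^ p" by simp
  then have c1: "fact p * real ((p + d) choose p) \<le> (real p + real d) ^ p"
    by (metis of_nat_add of_nat_fact of_nat_le_iff of_nat_mult of_nat_power)
  have e1: "real p ^ p / fact p \<le> exp (real p)" by (rule exp_ge_term) simp
  have fp: "0 < (fact p :: real)" by simp
  have pp: "0 < real p" using assms by simp
  have c2: "real ((p + d) choose p) \<le> (real p + real d) ^ p / fact p"
    using c1 fp by (simp add: field_simps)
  have "(real p + real d) ^ p = real d ^ p * (1 + real p / real d) ^ p"
    using assms by (simp add: field_simps power_mult_distrib[symmetric])
  also have "(1 + real p / real d) ^ p \<le> exp (real p / real d) ^ p"
    by (rule power_mono) (auto intro: exp_ge_add_one_self)
  also have "exp (real p / real d) ^ p = exp (real p ^ 2 / real d)"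
    by (simp add: exp_of_nat_mult[symmetric] power2_eq_square)
  finally have c3: "(real p + real d) ^ p \<le> real d ^ p * exp (real p ^ 2 / real d)"
    by (simp add: mult_left_mono)
  have "1 / fact p \<le> exp (real p) / real p ^ p"
    using e1 pp fp by (simp add: field_simps)
  also have "exp (real p) / real p ^ p = (exp 1 / real p) ^ p"
    by (simp add: power_divide exp_of_nat_mult[symmetric])
  finally have c4: "1 / fact p \<le> (exp 1 / real p) ^ p" .
  have "real (sdim p d) = real ((p + d) choose p)"
    by (simp add: sdim_def binomial_symmetric[of d "p+d"])
  also have "\<dots> \<le> (real p + real d) ^ p * (1 / fact p)" using c2 by simp
  also have "\<dots> \<le> (real d ^ p * exp (real p ^ 2 / real d)) * (exp 1 / real p) ^ p"
    by (rule mult_mono[OF c3 c4]) auto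
  finally show ?thesis by (simp add: ac_simps)
qed



theorem lemma6p6:
  fixes S :: "(real^'n) set" and x :: "real^'n" and \<delta> :: real and d :: nat
  assumes "compact S"
    and "closure (interior S) = S"
    and "x \<notin> S"
    and "0 < \<delta>"
    and "infdist x S \<ge> \<delta>"
    and "0 < d"
  shows "real (sdim CARD('n) d) * christoffel (unif_meas S) d x
         \<le> 2 powr (3 - \<delta> * real d / (\<delta> + diameter S)) * real d ^ CARD('n)
            * (exp 1 / real CARD('n)) ^ CARD('n) * exp (real CARD('n) ^ 2 / real d)"
proof -
  have Sne: "S \<noteq> {}" using assms(4,5) by (auto simp: infdist_def)
  have clS: "closed S" using assms(1) by (rule compact_imp_closed)
  have bS: "bounded S" using assms(1) by (rule compact_imp_bounded)
  define D where "D = infdist x S"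
  have Dpos: "\<delta> \<le> D" "0 < D" using assms(4,5) by (auto simp: D_def)
  obtain z0 where z0: "z0 \<in> S" "D = dist x z0"
    using infdist_attains_inf[OF clS Sne, of x] unfolding D_def by blast
  have "interior S \<noteq> {}" using assms(2) Sne by auto
  then obtain y where "y \<in> interior S" by blast
  then obtain e where e: "e > 0" "ball y e \<subseteq> S" by (auto simp: mem_interior)
  have Sm: "S \<in> sets lborel" using clS by simp
  have "0 < measure lborel (ball y e)" using content_ball_pos[OF e(1)] by simp
  then have "emeasure lborel (ball y e) \<noteq> 0"
    by (metis Sigma_Algebra.measure_def enn2real_0 less_irrefl)
  moreover have "emeasure lborel (ball y e) \<le> emeasure lborel S"
    using e Sm by (intro emeasure_mono) auto
  ultimately have Spos: "emeasure lborel S \<noteq> 0" by (metis le_zero_eq)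
  have Sfin: "emeasure lborel S \<noteq> \<infinity>" using emeasure_compact_finite[OF assms(1)] by simp
  obtain i :: 'n where True by blast
  define y' where "y' = y + (e/2) *\<^sub>R axis i 1"
  have "dist y y' = e/2" using e by (simp add: y'_def dist_norm)
  then have "y' \<in> S" using e by auto
  moreover have "y \<in> S" using e by auto
  ultimately have "dist y y' \<le> diameter S" using bS by (intro diameter_bounded_bound) auto
  then have Mpos: "0 < diameter S" using \<open>dist y y' = e/2\<close> e by simp
  define Mm where "Mm = diameter S"
  define R where "R = D + Mm"
  have dist_bounds: "D \<le> norm (z - x) \<and> norm (z - x) \<le> R" if "z \<in> S" for z
  proof -
    have "D \<le> dist x z" unfolding D_def by (rule infdist_le[OF that])
    moreover have "dist z0 z \<le> Mm" unfolding Mm_def using bS z0 that by (intro diameter_bounded_bound) auto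
    then have "dist x z \<le> R" using dist_triangle[of x z z0] z0 unfolding R_def by simp
    ultimately show ?thesis by (simp add: dist_norm norm_minus_commute)
  qed
  have RD: "R - D = Mm" "0 < Mm" using Mpos by (auto simp: R_def Mm_def)
  define l where "l = (R + D) / (R - D)"
  define m where "m = (R - D) / (R + D)"
  have lm: "l * m = 1" "0 < m" "0 < l" using RD Dpos by (auto simp: l_def m_def)
  define f where "f z = (R^2 + D^2 - 2 * (norm (z - x))^2) / (R^2 - D^2)" for z
  have RD2: "0 < R^2 - D^2"
    using RD Dpos by (simp add: power2_eq_square R_def algebra_simps add_pos_pos mult_pos_pos)
  have fpoly: "f \<in> polys_deg 2"
  proof -
    have "(\<lambda>z. (R^2 + D^2) / (R^2 - D^2) + (- 2 / (R^2 - D^2)) * (norm (z - x))^2) \<in> polys_deg 2"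
      by (intro polys_deg_add polys_deg_const polys_deg_scale polys_deg_normsq)
    moreover have "f = (\<lambda>z. (R^2 + D^2) / (R^2 - D^2) + (- 2 / (R^2 - D^2)) * (norm (z - x))^2)"
      unfolding f_def by (auto simp: fun_eq_iff diff_divide_distrib)
    ultimately show ?thesis by simp
  qed
  have fx: "f x = (l + m) / 2"
    using RD Dpos RD2 unfolding f_def l_def m_def
    by (simp add: field_simps power2_eq_square)
  have fS: "\<bar>f z\<bar> \<le> 1" if "z \<in> S" for z
  proof -
    have "D^2 \<le> (norm (z - x))^2" "(norm (z - x))^2 \<le> R^2"
      using dist_bounds[OF that] Dpos by (auto intro: power_mono)
    then show ?thesis using RD2 unfolding f_def by (auto simp: abs_le_iff field_simps)
  qed
  define k where "k = d div 2"
  define c0 where "c0 = cheb k (f x)"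
  have c0: "c0 = (l^k + m^k) / 2" unfolding c0_def fx by (rule cheb_lam[OF lm(1)])
  have c0ge: "l^k / 2 \<le> c0" using lm by (simp add: c0)
  have c0pos: "0 < c0" proof -
    have "0 < l^k / 2" using lm by simp
    then show ?thesis using c0ge by linarith
  qed
  define P where "P z = (1 / c0) * cheb k (f z)" for z
  have Ppoly: "P \<in> polys_deg d"
  proof -
    have "P \<in> polys_deg (k * 2)" unfolding P_def
      by (intro polys_deg_scale cheb_poly fpoly)
    then show ?thesis by (rule polys_deg_mono) (simp add: k_def)
  qed
  have Px: "P x = 1" using c0pos by (simp add: P_def c0_def)
  define B where "B = 4 / l ^ (2 * k)"
  have PS: "(P z)^2 \<le> B" if "z \<in> S" for z
  proof -
    have "\<bar>P z\<bar> \<le> 1 / c0" using cheb_bound[OF fS[OF that], of k] c0pos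
      by (simp add: P_def abs_mult divide_right_mono)
    also have "\<dots> \<le> 2 / l^k" using c0ge lm c0pos by (simp add: field_simps)
    finally have "(P z)^2 \<le> (2 / l^k)^2" using lm by (simp add: abs_le_square_iff[symmetric] power2_abs)
    also have "\<dots> = B" by (simp add: B_def power_divide power_mult[symmetric] mult.commute)
    finally show ?thesis .
  qed
  have B0: "0 \<le> B" using lm by (simp add: B_def)
  interpret ps: prob_space "uniform_measure lborel S"
    by (rule prob_space_uniform_measure[OF Spos Sfin])
  have AE: "AE z in uniform_measure lborel S. (P z)^2 \<le> B"
    by (rule AE_uniform_measureI[OF Sm]) (auto intro: PS)
  have intB: "integral\<^sup>L (unif_meas S) (\<lambda>z. (P z)^2) \<le> B"
  proof (cases "integrable (uniform_measure lborel S) (\<lambda>z. (P z)^2)")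
    case True then show ?thesis unfolding unif_meas_def by (rule ps.integral_le_const[OF _ AE])
  next
    case False then show ?thesis using B0 by (simp add: unif_meas_def not_integrable_integral_eq)
  qed
  have chr: "christoffel (unif_meas S) d x \<le> B"
  proof -
    have "christoffel (unif_meas S) d x \<le> integral\<^sup>L (unif_meas S) (\<lambda>z. (P z)^2)"
      unfolding christoffel_def
      by (rule cInf_lower) (use Ppoly Px in \<open>auto intro!: bdd_belowI[of _ 0]\<close>)
    with intB show ?thesis by simp
  qed
  define \<tau> where "\<tau> = D / R"
  have tau: "0 < \<tau>" "\<tau> < 1" using RD Dpos by (auto simp: \<tau>_def R_def)
  have "l \<ge> 1 / (1 - \<tau>)"
  proof -
    have "1 / (1 - \<tau>) = R / (R - D)" using RD Dpos by (simp add: \<tau>_def field_simps R_def)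
    also have "\<dots> \<le> l" unfolding l_def using RD Dpos by (simp add: divide_right_mono)
    finally show ?thesis .
  qed
  moreover have "exp \<tau> \<le> 1 / (1 - \<tau>)"
  proof -
    have "1 - \<tau> \<le> exp (- \<tau>)" using exp_ge_add_one_self[of "-\<tau>"] by simp
    then show ?thesis using tau by (simp add: exp_minus field_simps)
  qed
  moreover have "2 powr \<tau> \<le> exp \<tau>"
    using ln_2_less_1 tau by (simp add: powr_def)
  ultimately have l2: "2 powr \<tau> \<le> l" by linarith
  have "2 powr (\<tau> * real (2 * k)) = (2 powr \<tau>) ^ (2 * k)"
    by (simp add: powr_power mult.commute)
  also have "\<dots> \<le> l ^ (2 * k)" by (rule power_mono[OF l2]) simp
  finally have lk: "2 powr (\<tau> * real (2 * k)) \<le> l ^ (2 * k)" .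
  have "B \<le> 4 / 2 powr (\<tau> * real (2 * k))"
    unfolding B_def by (rule divide_left_mono[OF lk]) (use lm in auto)
  also have "\<dots> = 2 powr (2 - \<tau> * real (2 * k))"
    by (simp add: powr_diff)
  also have "\<dots> \<le> 2 powr (3 - \<delta> * real d / (\<delta> + diameter S))"
  proof (rule powr_mono)
    have tt: "\<delta> / (\<delta> + Mm) \<le> \<tau>"
    proof -
      have "\<delta> * Mm \<le> D * Mm" using Dpos RD by (simp add: mult_right_mono)
      then show ?thesis using Dpos RD assms(4) unfolding \<tau>_def R_def by (simp add: field_simps)
    qed
    have "real d - 1 \<le> real (2 * k)" unfolding k_def by linarith
    then have "\<tau> * (real d - 1) \<le> \<tau> * real (2 * k)" using tau by (simp add: mult_left_mono)
    moreover have "\<delta> * real d / (\<delta> + Mm) \<le> \<tau> * real d"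
      by (metis mult_right_mono[OF tt] of_nat_0_le_iff times_divide_eq_left)
    ultimately show "2 - \<tau> * real (2 * k) \<le> 3 - \<delta> * real d / (\<delta> + diameter S)"
      using tau unfolding Mm_def by (simp add: algebra_simps)
  qed simp
  finally have Bb: "B \<le> 2 powr (3 - \<delta> * real d / (\<delta> + diameter S))" .
  have p1: "1 \<le> CARD('n)" by (simp add: Suc_le_eq)
  note sb = sdim_bound[OF p1 assms(6)]
  have "real (sdim CARD('n) d) * christoffel (unif_meas S) d x
      \<le> real (sdim CARD('n) d) * 2 powr (3 - \<delta> * real d / (\<delta> + diameter S))"
    using chr Bb by (intro mult_left_mono) auto
  also have "\<dots> \<le> (real d ^ CARD('n) * (exp 1 / real CARD('n)) ^ CARD('n) * exp (real CARD('n) ^ 2 / real d))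
      * 2 powr (3 - \<delta> * real d / (\<delta> + diameter S))"
    by (rule mult_right_mono[OF sb]) simp
  finally show ?thesis by (simp add: ac_simps)
qed


end
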